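(* Let $G$ be a finite group and $H$ a subgroup of $G$ with $[G:H]>2$. Then the set $$f_{G-H}=\bigcup_{\substack{g,h\in G\\ g,\,h,\,g^{-1}h\in G-H}}\{\{a,ag,ah\}\mid a\in G\}\subseteq\binom{G}{3}$$ is the set of bases of a rank-$3$ matroid on the ground set $G$ (invariant under left multiplication by $G$); equivalently it corresponds to a three-dimensional tropical subrepresentation of the boolean regular representation $\mathbb{B}[G]$.
   Context: $G$ acts on $\binom{G}{3}$ (3-element subsets of $G$) by $x\cdot\{a,b,c\}=\{xa,xb,xc\}$; the sets $\{\{a,ag,ah\}\mid a\in G\}$ for $e,g,h$ pairwise distinct are the orbits. Three-dimensional tropical subrepresentations of $\mathbb{B}[G]$ (free module over the boolean semifield with basis indexed by $G$, $G$ acting by left multiplication) are equivalent to rank-3 matroids on ground set $G$ with basis set invariant under this action. *)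

theory Defs
  imports "HOL-Algebra.Algebra"
begin

definition matroid_bases :: "'a set \<Rightarrow> 'a set set \<Rightarrow> bool" where
  "matroid_bases E \<B> \<longleftrightarrow>
     finite E \<and> \<B> \<noteq> {} \<and> (\<forall>B\<in>\<B>. B \<subseteq> E) \<and>
     (\<forall>B1\<in>\<B>. \<forall>B2\<in>\<B>. \<forall>x\<in>B1 - B2. \<exists>y\<in>B2 - B1. insert y (B1 - {x}) \<in> \<B>)"

definition matroid_bases_rank :: "'a set \<Rightarrow> nat \<Rightarrow> 'a set set \<Rightarrow> bool" where
  "matroid_bases_rank E r \<B> \<longleftrightarrow> matroid_bases E \<B> \<and> (\<forall>B\<in>\<B>. card B = r)"

definition fGH :: "('a, 'b) monoid_scheme \<Rightarrow> 'a set \<Rightarrow> 'a set set" where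
  "fGH G H = {{a, a \<otimes>\<^bsub>G\<^esub> g, a \<otimes>\<^bsub>G\<^esub> h} | a g h.
      a \<in> carrier G \<and> g \<in> carrier G \<and> h \<in> carrier G \<and>
      g \<notin> H \<and> h \<notin> H \<and> inv\<^bsub>G\<^esub> g \<otimes>\<^bsub>G\<^esub> h \<notin> H}"

end

theory Submission
  imports Defs
begin


lemma pigeon:
  assumes sap: "R a' p \<Longrightarrow> R p a'" and saq: "R a' q \<Longrightarrow> R q a'"
    and sbp: "R b' p \<Longrightarrow> R p b'" and sbq: "R b' q \<Longrightarrow> R q b'"
    and t1: "R a' p \<Longrightarrow> R p b' \<Longrightarrow> R a' b'"
    and t2: "R a' q \<Longrightarrow> R q b' \<Longrightarrow> R a' b'"
    and t3: "R a' p \<Longrightarrow> R p c' \<Longrightarrow> R a' c'"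
    and t4: "R a' q \<Longrightarrow> R q c' \<Longrightarrow> R a' c'"
    and t5: "R b' p \<Longrightarrow> R p c' \<Longrightarrow> R b' c'"
    and t6: "R b' q \<Longrightarrow> R q c' \<Longrightarrow> R b' c'"
    and sc1: "R c' p \<Longrightarrow> R p c'" and sc2: "R c' q \<Longrightarrow> R q c'"
    and n: "\<not> R a' b'" "\<not> R a' c'" "\<not> R b' c'"
  shows "\<exists>y\<in>{a',b',c'}. \<not> R y p \<and> \<not> R y q"
proof (cases "R a' p")
  case True
  hence "\<not> R b' p" using sbp t1 n by blast
  show ?thesis
  proof (cases "R b' q")
    case True
    have "\<not> R c' p" using sc1 t3 \<open>R a' p\<close> n by blast
    moreover have "\<not> R c' q" using sc2 t6 True n by blast
    ultimately show ?thesis by blast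
  next
    case False thus ?thesis using \<open>\<not> R b' p\<close> by blast
  qed
next
  case False
  show ?thesis
  proof (cases "R a' q")
    case aq: True
    hence nbq: "\<not> R b' q" using sbq t2 n by blast
    show ?thesis
    proof (cases "R b' p")
      case True
      have "\<not> R c' p" using sc1 t5 True n by blast
      moreover have "\<not> R c' q" using sc2 t4 aq n by blast
      ultimately show ?thesis by blast
    next
      case False thus ?thesis using nbq by blast
    qed
  next
    case False thus ?thesis using \<open>\<not> R a' p\<close> by blast
  qed
qed

context group begin

definition RR where "RR H u v \<longleftrightarrow> inv u \<otimes> v \<in> H"

lemma RR_sym: "subgroup H G \<Longrightarrow> u \<in> carrier G \<Longrightarrow> v \<in> carrier G \<Longrightarrow> RR H u v \<Longrightarrow> RR H v u"
  unfolding RR_def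
proof -
  assume a: "subgroup H G" "u \<in> carrier G" "v \<in> carrier G" "inv u \<otimes> v \<in> H"
  have "inv (inv u \<otimes> v) \<in> H" by (rule subgroup.m_inv_closed[OF a(1) a(4)])
  moreover have "inv (inv u \<otimes> v) = inv v \<otimes> u" using a by (simp add: inv_mult_group)
  ultimately show "inv v \<otimes> u \<in> H" by simp
qed

lemma RR_trans: "subgroup H G \<Longrightarrow> u \<in> carrier G \<Longrightarrow> v \<in> carrier G \<Longrightarrow> w \<in> carrier G
   \<Longrightarrow> RR H u v \<Longrightarrow> RR H v w \<Longrightarrow> RR H u w"
  unfolding RR_def
proof -
  assume a: "subgroup H G" "u \<in> carrier G" "v \<in> carrier G" "w \<in> carrier G"
    "inv u \<otimes> v \<in> H" "inv v \<otimes> w \<in> H"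
  have "(inv u \<otimes> v) \<otimes> (inv v \<otimes> w) \<in> H" by (rule subgroup.m_closed[OF a(1) a(5) a(6)])
  moreover have "(inv u \<otimes> v) \<otimes> (inv v \<otimes> w) = inv u \<otimes> w"
    using a by (simp add: m_assoc[symmetric]) (simp add: m_assoc)
  ultimately show "inv u \<otimes> w \<in> H" by simp
qed

lemma RR_refl: "subgroup H G \<Longrightarrow> u \<in> carrier G \<Longrightarrow> RR H u u"
  unfolding RR_def by (simp add: subgroup.one_closed)

lemma fGH_char:
  assumes "subgroup H G"
  shows "B \<in> fGH G H \<longleftrightarrow> (\<exists>a b c. B = {a,b,c} \<and> a \<in> carrier G \<and> b \<in> carrier G \<and> c \<in> carrier G
      \<and> \<not> RR H a b \<and> \<not> RR H a c \<and> \<not> RR H b c)"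
proof
  assume "B \<in> fGH G H"
  then obtain a g h where B: "B = {a, a \<otimes> g, a \<otimes> h}" and c: "a \<in> carrier G" "g \<in> carrier G" "h \<in> carrier G"
     "g \<notin> H" "h \<notin> H" "inv g \<otimes> h \<notin> H" unfolding fGH_def by blast
  have e1: "inv a \<otimes> (a \<otimes> g) = g" using c by (simp add: m_assoc[symmetric])
  have e2: "inv a \<otimes> (a \<otimes> h) = h" using c by (simp add: m_assoc[symmetric])
  have e3: "inv (a \<otimes> g) \<otimes> (a \<otimes> h) = inv g \<otimes> h" using c
    by (simp add: inv_mult_group m_assoc) (simp add: m_assoc[symmetric])
  show "\<exists>a b c. B = {a,b,c} \<and> a \<in> carrier G \<and> b \<in> carrier G \<and> c \<in> carrier G
      \<and> \<not> RR H a b \<and> \<not> RR H a c \<and> \<not> RR H b c"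
  proof -
    have F: "B = {a, a \<otimes> g, a \<otimes> h} \<and> a \<in> carrier G \<and> a \<otimes> g \<in> carrier G \<and> a \<otimes> h \<in> carrier G
      \<and> \<not> RR H a (a \<otimes> g) \<and> \<not> RR H a (a \<otimes> h) \<and> \<not> RR H (a \<otimes> g) (a \<otimes> h)"
      using B c e1 e2 e3 unfolding RR_def by simp
    show ?thesis by (rule exI, rule exI, rule exI, rule F)
  qed
next
  assume "\<exists>a b c. B = {a,b,c} \<and> a \<in> carrier G \<and> b \<in> carrier G \<and> c \<in> carrier G
      \<and> \<not> RR H a b \<and> \<not> RR H a c \<and> \<not> RR H b c"
  then obtain a b c where B: "B = {a,b,c}" and c: "a \<in> carrier G" "b \<in> carrier G" "c \<in> carrier G"
    "\<not> RR H a b" "\<not> RR H a c" "\<not> RR H b c" by blast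
  define g where "g = inv a \<otimes> b"
  define h where "h = inv a \<otimes> c"
  have 1: "a \<otimes> g = b" "a \<otimes> h = c" using c unfolding g_def h_def by (simp_all add: m_assoc[symmetric])
  have 2: "inv g \<otimes> h = inv b \<otimes> c" using c unfolding g_def h_def
    by (simp add: inv_mult_group m_assoc) (simp add: m_assoc[symmetric])
  show "B \<in> fGH G H"
  proof -
    have gc: "g \<in> carrier G" "h \<in> carrier G" unfolding g_def h_def using c by auto
    have ng: "g \<notin> H" "h \<notin> H" "inv b \<otimes> c \<notin> H" using c unfolding RR_def g_def h_def by auto
    have ngh: "inv g \<otimes> h \<notin> H" using ng(3) 2 by simp
    have BB: "B = {a, a \<otimes> g, a \<otimes> h}" using B 1 by simp
    have F: "B = {a, a \<otimes> g, a \<otimes> h} \<and> a \<in> carrier G \<and> g \<in> carrier G \<and> h \<in> carrier G \<and>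
      g \<notin> H \<and> h \<notin> H \<and> inv g \<otimes> h \<notin> H"
      using BB c(1) gc ng(1,2) ngh by (intro conjI)
    show ?thesis unfolding fGH_def mem_Collect_eq
      by (rule exI, rule exI, rule exI, rule F)
  qed
qed

lemma fGH_intro:
  assumes "subgroup H G" "a \<in> carrier G" "b \<in> carrier G" "c \<in> carrier G"
    "\<not> RR H a b" "\<not> RR H a c" "\<not> RR H b c"
  shows "{a,b,c} \<in> fGH G H"
  unfolding fGH_char[OF assms(1)]
  apply (rule exI, rule exI, rule exI, rule conjI, rule refl)
  using assms by simp

lemma RR_neq: "subgroup H G \<Longrightarrow> u \<in> carrier G \<Longrightarrow> \<not> RR H u v \<Longrightarrow> u \<noteq> v"
  using RR_refl by blast

lemma rcos_RR:
  assumes "subgroup H G" "u \<in> carrier G" "v \<in> carrier G" "H #> u \<noteq> H #> v"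
  shows "\<not> RR H (inv u) (inv v)"
proof
  assume "RR H (inv u) (inv v)"
  hence hh: "u \<otimes> inv v \<in> H" unfolding RR_def using assms by simp
  have "u = (u \<otimes> inv v) \<otimes> v" using assms by (simp add: m_assoc)
  hence "u \<in> H #> v" using hh unfolding r_coset_def by blast
  hence "H #> v = H #> u" using repr_independence assms by blast
  thus False using assms by simp
qed

end

theorem mainTheorem11:
  fixes G (structure) and H :: "'a set"
  assumes "group G" and "finite (carrier G)" and "subgroup H G"
    and "card (rcosets H) > 2"
  shows "matroid_bases_rank (carrier G) 3 (fGH G H) \<and>
         (\<forall>x\<in>carrier G. \<forall>B\<in>fGH G H. (\<lambda>b. x \<otimes> b) ` B \<in> fGH G H)"
proof -
  interpret group G by fact
  note sg = assms(3)
  note ch = fGH_char[OF sg]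
  have sy: "\<And>u v. u \<in> carrier G \<Longrightarrow> v \<in> carrier G \<Longrightarrow> RR H u v \<Longrightarrow> RR H v u"
    using RR_sym[OF sg] by blast
  have tr: "\<And>u v w. u \<in> carrier G \<Longrightarrow> v \<in> carrier G \<Longrightarrow> w \<in> carrier G
   \<Longrightarrow> RR H u v \<Longrightarrow> RR H v w \<Longrightarrow> RR H u w" using RR_trans[OF sg] by blast
  have nonempty: "fGH G H \<noteq> {}"
  proof -
    have "3 \<le> card (rcosets H)" using assms(4) by simp
    then obtain S where S: "S \<subseteq> rcosets H" "card S = 3" "finite S"
      by (rule obtain_subset_with_card_n)
    from S(2) obtain S1 S2 S3 where XYZ: "S = {S1,S2,S3}" "S1 \<noteq> S2" "S2 \<noteq> S3" "S1 \<noteq> S3"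
      unfolding card_3_iff by blast
    have m: "S1 \<in> rcosets H" "S2 \<in> rcosets H" "S3 \<in> rcosets H" using S(1) XYZ(1) by auto
    obtain u where u: "u \<in> carrier G" "S1 = H #> u" using m(1) unfolding RCOSETS_def by blast
    obtain v where v: "v \<in> carrier G" "S2 = H #> v" using m(2) unfolding RCOSETS_def by blast
    obtain w where w: "w \<in> carrier G" "S3 = H #> w" using m(3) unfolding RCOSETS_def by blast
    have uvw: "u \<in> carrier G" "v \<in> carrier G" "w \<in> carrier G" using u v w by auto
    have n: "\<not> RR H (inv u) (inv v)" "\<not> RR H (inv u) (inv w)" "\<not> RR H (inv v) (inv w)"
      using rcos_RR[OF sg u(1) v(1)] rcos_RR[OF sg u(1) w(1)] rcos_RR[OF sg v(1) w(1)]
        XYZ u(2) v(2) w(2) by auto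
    have "{inv u, inv v, inv w} \<in> fGH G H"
      using fGH_intro[OF sg _ _ _ n] uvw by simp
    thus ?thesis by blast
  qed
  have sub: "\<forall>B\<in>fGH G H. B \<subseteq> carrier G"
  proof
    fix B assume "B \<in> fGH G H"
    then obtain a b c where B: "B = {a,b,c}" "a \<in> carrier G" "b \<in> carrier G" "c \<in> carrier G"
      unfolding ch by blast
    thus "B \<subseteq> carrier G" by simp
  qed
  have card: "\<forall>B\<in>fGH G H. card B = 3"
  proof
    fix B assume "B \<in> fGH G H"
    then obtain a b c where B: "B = {a,b,c}" "a \<in> carrier G" "b \<in> carrier G" "c \<in> carrier G"
      "\<not> RR H a b" "\<not> RR H a c" "\<not> RR H b c" unfolding ch by blast
    have "a \<noteq> b" "a \<noteq> c" "b \<noteq> c" using B RR_neq[OF sg] by auto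
    thus "card B = 3" using B by simp
  qed
  have exch: "\<forall>B1\<in>fGH G H. \<forall>B2\<in>fGH G H. \<forall>x\<in>B1 - B2. \<exists>y\<in>B2 - B1. insert y (B1 - {x}) \<in> fGH G H"
  proof (intro ballI)
    fix B1 B2 x assume b1: "B1 \<in> fGH G H" and b2: "B2 \<in> fGH G H" and x: "x \<in> B1 - B2"
    obtain a b c where B: "B1 = {a,b,c}" "a \<in> carrier G" "b \<in> carrier G" "c \<in> carrier G"
      "\<not> RR H a b" "\<not> RR H a c" "\<not> RR H b c" using b1 unfolding ch by blast
    obtain a' b' c' where B': "B2 = {a',b',c'}" "a' \<in> carrier G" "b' \<in> carrier G" "c' \<in> carrier G"
      "\<not> RR H a' b'" "\<not> RR H a' c'" "\<not> RR H b' c'" using b2 unfolding ch by blast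
    have ne: "a \<noteq> b" "a \<noteq> c" "b \<noteq> c" using B RR_neq[OF sg] by auto
    obtain p q where pq: "B1 - {x} = {p,q}" "p \<in> carrier G" "q \<in> carrier G" "\<not> RR H p q"
    proof -
      consider "x = a" | "x = b" | "x = c" using x B by auto
      thus ?thesis
      proof cases
        case 1 thus ?thesis using that[of b c] B ne by auto
      next
        case 2 thus ?thesis using that[of a c] B ne by auto
      next
        case 3 thus ?thesis using that[of a b] B ne by auto
      qed
    qed
    have "\<exists>y\<in>{a',b',c'}. \<not> RR H y p \<and> \<not> RR H y q"
      apply (rule pigeon[where R="RR H"])
      using sy[of a' p] sy[of a' q] sy[of b' p] sy[of b' q] sy[of c' p] sy[of c' q]
        tr[of a' p b'] tr[of a' q b'] tr[of a' p c'] tr[of a' q c'] tr[of b' p c'] tr[of b' q c']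
        B' pq by simp_all
    then obtain y where y: "y \<in> B2" "\<not> RR H y p" "\<not> RR H y q" using B' by blast
    have yc: "y \<in> carrier G" using y B' by auto
    have "y \<notin> B1 - {x}" using y pq RR_refl[OF sg] by auto
    hence "y \<notin> B1" using x y by auto
    moreover have "insert y (B1 - {x}) \<in> fGH G H" unfolding pq
      using fGH_intro[OF sg yc pq(2) pq(3) y(2) y(3) pq(4)] .
    ultimately show "\<exists>y\<in>B2 - B1. insert y (B1 - {x}) \<in> fGH G H" using y by blast
  qed
  have inv: "\<forall>x\<in>carrier G. \<forall>B\<in>fGH G H. (\<lambda>b. x \<otimes> b) ` B \<in> fGH G H"
  proof (intro ballI)
    fix x B assume x: "x \<in> carrier G" and "B \<in> fGH G H"
    then obtain a b c where B: "B = {a,b,c}" "a \<in> carrier G" "b \<in> carrier G" "c \<in> carrier G"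
      "\<not> RR H a b" "\<not> RR H a c" "\<not> RR H b c" unfolding ch by blast
    have e: "\<And>u v. u \<in> carrier G \<Longrightarrow> v \<in> carrier G \<Longrightarrow> RR H (x \<otimes> u) (x \<otimes> v) = RR H u v"
      unfolding RR_def using x
      by (simp add: inv_mult_group m_assoc) (simp add: m_assoc[symmetric])
    have im: "(\<lambda>b. x \<otimes> b) ` B = {x \<otimes> a, x \<otimes> b, x \<otimes> c}" using B(1) by simp
    have "{x \<otimes> a, x \<otimes> b, x \<otimes> c} \<in> fGH G H"
      apply (rule fGH_intro[OF sg])
      using B x e by simp_all
    thus "(\<lambda>b. x \<otimes> b) ` B \<in> fGH G H" unfolding im .
  qed
  show ?thesis
    unfolding matroid_bases_rank_def matroid_bases_def
    using assms(2) nonempty sub card exch inv by blast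
qed

end
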